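(* Let $E$ be a fixed-point equation system with interpretation $[\![E]\!]\colon\mathbb{E}(D)\to\mathbb{E}(D)$, and let $\eta'\in\mathbb{E}(D)$. Then $\eta'\le\mu[\![E]\!]$ holds if there exist: (a) a fixed-point equation system $E'$ over the same quantitative predicate variables such that $[\![E']\!]\le[\![E]\!]$ (i.e. $[\![E']\!](\eta)\le[\![E]\!](\eta)$ for all $\eta\in\mathbb{E}(D)$); (b) $u\in\mathbb{E}(D)$ with $[\![E']\!](u)\le u$; (c) a function $r\colon D\to[0,\infty)$ with $(\mathsf{D}[\![E']\!])(r)+u\le r$; and (d) $\eta'\le u$ together with $\eta'\le[\![E']\!](\eta')$.
   Context: $\mathbb{E}(D)$ is the set of functions $D\to[0,\infty]$ with pointwise order and operations ($\infty+x=\infty$, $0\cdot\infty=0$, $r\cdot\infty=\infty$ for $r>0$); for $x\ge y$ in $[0,\infty]$, $x-y$ is the least $z$ with $x=y+z$; $\mathbb{O}$ is the zero function; for a map $K$ on $\mathbb{E}(D)$, $(\mathsf{D}K)(\eta)=K(\eta)-K(\mathbb{O})$; $\mu K$ is the least fixed point. Quantitative formulas over quantitative predicate variables $X_1,\dots,X_n$ (with $X_j$ of type $D_j\to\Omega$) are given by $F ::= X_j(\tilde e)\mid t\mid F_1+F_2\mid t\cdot F\mid \mathbf{if}\ \varphi\ \mathbf{then}\ F_1\ \mathbf{else}\ F_2$, where $\tilde e$ are expressions (functions of the term variables) of the argument data types, $t$ is a term taking values in $[0,\infty)$, and $\varphi$ is a boolean expression. For $\eta=(\eta_1,\dots,\eta_n)$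 and a valuation $v$ of the term variables: $[\![X_j(e)]\!](\eta)(v)=\eta_j([\![e]\!](v))$, $[\![t]\!](\eta)(v)=[\![t]\!](v)$, sums and scalar products pointwise, and the conditional by cases on $[\![\varphi]\!](v)$. A fixed-point equation system is $E=\{X_i(\tilde x_i)=_\mu F_i\}_{i=1}^n$ with $\tilde x_i$ ranging over $D_i$ and $F_i$ having free term variables among $\tilde x_i$; with $D=\coprod_j D_j$ and $\prod_j\mathbb{E}(D_j)\cong\mathbb{E}(D)$, its interpretation is $[\![E]\!](\eta)=([\![F_1]\!](\eta),\dots,[\![F_n]\!](\eta))$. *)

theory Defs
  imports "HOL-Library.Extended_Nonnegative_Real"
begin

text \<open>The disjoint union D of the data types D_j is modelled by a type 'd together
with a map idx :: 'd => 'i assigning to each point the index j of its component,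
so D_j = {x. idx x = j}. Elements of E(D) are functions 'd => ennreal.
A term variable valuation for equation i is a point v of D_i.\<close>

datatype ('i, 'd) qform =
    PVar 'i "'d \<Rightarrow> 'd"
  | Tm "'d \<Rightarrow> real"
  | Plus "('i, 'd) qform" "('i, 'd) qform"
  | Scale "'d \<Rightarrow> real" "('i, 'd) qform"
  | Ite "'d \<Rightarrow> bool" "('i, 'd) qform" "('i, 'd) qform"

fun wf_form :: "('d \<Rightarrow> 'i) \<Rightarrow> 'i \<Rightarrow> ('i, 'd) qform \<Rightarrow> bool" where
  "wf_form idx i (PVar j e) = (\<forall>v. idx v = i \<longrightarrow> idx (e v) = j)"
| "wf_form idx i (Tm t) = (\<forall>v. idx v = i \<longrightarrow> t v \<ge> 0)"
| "wf_form idx i (Plus F G) = (wf_form idx i F \<and> wf_form idx i G)"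
| "wf_form idx i (Scale t F) = ((\<forall>v. idx v = i \<longrightarrow> t v \<ge> 0) \<and> wf_form idx i F)"
| "wf_form idx i (Ite b F G) = (wf_form idx i F \<and> wf_form idx i G)"

fun qsem :: "('i, 'd) qform \<Rightarrow> ('d \<Rightarrow> ennreal) \<Rightarrow> 'd \<Rightarrow> ennreal" where
  "qsem (PVar j e) \<eta> v = \<eta> (e v)"
| "qsem (Tm t) \<eta> v = ennreal (t v)"
| "qsem (Plus F G) \<eta> v = qsem F \<eta> v + qsem G \<eta> v"
| "qsem (Scale t F) \<eta> v = ennreal (t v) * qsem F \<eta> v"
| "qsem (Ite b F G) \<eta> v = (if b v then qsem F \<eta> v else qsem G \<eta> v)"

definition wf_sys :: "('d \<Rightarrow> 'i) \<Rightarrow> ('i \<Rightarrow> ('i, 'd) qform) \<Rightarrow> bool" where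
  "wf_sys idx E = (\<forall>i. wf_form idx i (E i))"

definition sys_sem :: "('d \<Rightarrow> 'i) \<Rightarrow> ('i \<Rightarrow> ('i, 'd) qform) \<Rightarrow> ('d \<Rightarrow> ennreal) \<Rightarrow> 'd \<Rightarrow> ennreal" where
  "sys_sem idx E \<eta> x = qsem (E (idx x)) \<eta> x"

definition esub :: "ennreal \<Rightarrow> ennreal \<Rightarrow> ennreal" where
  "esub x y = Inf {z. x = y + z}"

definition Dop :: "(('d \<Rightarrow> ennreal) \<Rightarrow> 'd \<Rightarrow> ennreal) \<Rightarrow> ('d \<Rightarrow> ennreal) \<Rightarrow> 'd \<Rightarrow> ennreal" where
  "Dop K \<eta> = (\<lambda>x. esub (K \<eta> x) (K (\<lambda>_. 0) x))"

end

theory Submission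
  imports Defs "HOL-Library.Function_Algebras"
begin

fun lsem :: "('i, 'd) qform \<Rightarrow> ('d \<Rightarrow> ennreal) \<Rightarrow> 'd \<Rightarrow> ennreal" where
  "lsem (PVar j e) \<eta> v = \<eta> (e v)"
| "lsem (Tm t) \<eta> v = 0"
| "lsem (Plus F G) \<eta> v = lsem F \<eta> v + lsem G \<eta> v"
| "lsem (Scale t F) \<eta> v = ennreal (t v) * lsem F \<eta> v"
| "lsem (Ite b F G) \<eta> v = (if b v then lsem F \<eta> v else lsem G \<eta> v)"

lemma qsem_split: "qsem F \<eta> v = qsem F (\<lambda>_. 0) v + lsem F \<eta> v"
  by (induction F arbitrary: v) (auto simp: distrib_left ac_simps)

lemma lsem_add: "lsem F (\<lambda>y. a y + b y) v = lsem F a v + lsem F b v"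
  by (induction F arbitrary: v) (auto simp: distrib_left ac_simps)

lemma lsem_mono: "a \<le> b \<Longrightarrow> lsem F a v \<le> lsem F b v"
  by (induction F arbitrary: v) (auto simp: le_fun_def intro: add_mono mult_left_mono)

lemma qsem_mono: "a \<le> b \<Longrightarrow> qsem F a v \<le> qsem F b v"
  by (induction F arbitrary: v) (auto simp: le_fun_def intro: add_mono mult_left_mono)

lemma lsem_zero: "lsem F (\<lambda>_. 0) v = 0"
  by (induction F arbitrary: v) auto

lemma qsem0_fin: "qsem F (\<lambda>_. 0) v < top"
  by (induction F arbitrary: v) (auto simp: ennreal_mult_less_top)

definition Lop :: "('d \<Rightarrow> 'i) \<Rightarrow> ('i \<Rightarrow> ('i, 'd) qform) \<Rightarrow> ('d \<Rightarrow> ennreal) \<Rightarrow> 'd \<Rightarrow> ennreal" where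
  "Lop idx E \<eta> x = lsem (E (idx x)) \<eta> x"

lemma Lop_add: "Lop idx E (a + b) = Lop idx E a + Lop idx E b"
  unfolding Lop_def plus_fun_def by (simp add: lsem_add)

lemma Lop_zero: "Lop idx E 0 = 0"
  unfolding Lop_def zero_fun_def by (simp add: lsem_zero)

lemma Lop_mono: "a \<le> b \<Longrightarrow> Lop idx E a \<le> Lop idx E b"
  unfolding Lop_def le_fun_def by (simp add: lsem_mono le_fun_def)

lemma Lop_sum: "Lop idx E (\<Sum>k<(n::nat). f k) = (\<Sum>k<n. Lop idx E (f k))"
  by (induction n) (simp_all only: sum.lessThan_Suc Lop_add Lop_zero sum.empty lessThan_0)

lemma sum_fun_app: "(\<Sum>k<(n::nat). f k) x = (\<Sum>k<n. f k x)"
  by (induction n) simp_all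

lemma Lpow_mono: "a \<le> b \<Longrightarrow> (Lop idx E ^^ n) a \<le> (Lop idx E ^^ n) b"
  by (induction n arbitrary: a b) (simp_all add: Lop_mono)

lemma K_split: "sys_sem idx E \<eta> = sys_sem idx E 0 + Lop idx E \<eta>"
  unfolding sys_sem_def Lop_def plus_fun_def zero_fun_def
  by (rule ext, rule qsem_split)

lemma K_mono: "mono (sys_sem idx E)"
  unfolding mono_def sys_sem_def le_fun_def by (simp add: qsem_mono le_fun_def)

lemma K0_fin: "sys_sem idx E 0 x < top"
  unfolding sys_sem_def zero_fun_def by (rule qsem0_fin)

lemma Dop_eq: "Dop (sys_sem idx E) \<eta> x = Lop idx E \<eta> x"
proof -
  have c: "sys_sem idx E (\<lambda>_. 0) x < top" using K0_fin[of idx E x] by (simp add: zero_fun_def)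
  have "sys_sem idx E \<eta> x = sys_sem idx E (\<lambda>_. 0) x + Lop idx E \<eta> x"
    using K_split[of idx E \<eta>] by (simp add: plus_fun_def zero_fun_def)
  then have "{z. sys_sem idx E \<eta> x = sys_sem idx E (\<lambda>_. 0) x + z} = {Lop idx E \<eta> x}"
    using c by (auto simp: ennreal_add_left_cancel)
  then show ?thesis unfolding Dop_def esub_def by simp
qed

lemma Kpow_split: "(sys_sem idx E ^^ n) \<eta> = (sys_sem idx E ^^ n) 0 + (Lop idx E ^^ n) \<eta>"
proof (induction n)
  case 0 then show ?case by simp
next
  case (Suc n)
  have "(sys_sem idx E ^^ Suc n) \<eta> = sys_sem idx E 0 + Lop idx E ((sys_sem idx E ^^ n) 0 + (Lop idx E ^^ n) \<eta>)"
    unfolding funpow.simps o_apply Suc.IH by (rule K_split)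
  also have "\<dots> = (sys_sem idx E 0 + Lop idx E ((sys_sem idx E ^^ n) 0)) + (Lop idx E ^^ Suc n) \<eta>"
    by (simp add: Lop_add add.assoc)
  also have "sys_sem idx E 0 + Lop idx E ((sys_sem idx E ^^ n) 0) = (sys_sem idx E ^^ Suc n) 0"
    using K_split[of idx E "(sys_sem idx E ^^ n) 0"] by simp
  finally show ?case .
qed

theorem theorem4p1:
  fixes idx :: "'d \<Rightarrow> 'i::finite"
    and E E' :: "'i \<Rightarrow> ('i, 'd) qform"
    and eta' u :: "'d \<Rightarrow> ennreal"
    and r :: "'d \<Rightarrow> real"
  assumes "wf_sys idx E" and "wf_sys idx E'"
    and "\<forall>\<eta>. sys_sem idx E' \<eta> \<le> sys_sem idx E \<eta>"
    and "sys_sem idx E' u \<le> u"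
    and "\<forall>x. r x \<ge> 0"
    and "\<forall>x. Dop (sys_sem idx E') (\<lambda>y. ennreal (r y)) x + u x \<le> ennreal (r x)"
    and "eta' \<le> u" and "eta' \<le> sys_sem idx E' eta'"
  shows "eta' \<le> lfp (sys_sem idx E)"
proof -
  define K where "K = sys_sem idx E'"
  define L where "L = Lop idx E'"
  define R where "R = (\<lambda>y. ennreal (r y))"
  have Kmono: "mono K" unfolding K_def by (rule K_mono)
  have Lu: "L u \<le> u"
  proof -
    have "L u \<le> K 0 + L u" by (simp add: le_fun_def)
    also have "\<dots> = K u" unfolding K_def L_def by (rule K_split[symmetric])
    finally show ?thesis using assms(4) K_def by simp
  qed
  have LR: "L R + u \<le> R"
    using assms(6) unfolding L_def R_def by (simp add: le_fun_def Dop_eq)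
  have Lpu: "(L ^^ m) u \<le> u" for m
  proof (induction m)
    case (Suc m)
    have "(L ^^ Suc m) u = L ((L ^^ m) u)" by simp
    also have "\<dots> \<le> L u" unfolding L_def by (rule Lop_mono) (use Suc L_def in simp)
    finally show ?case using Lu by simp
  qed simp
  have dec: "(L ^^ n) u \<le> (L ^^ k) u" if "k \<le> n" for k n
  proof -
    have "(L ^^ n) u = (L ^^ k) ((L ^^ (n - k)) u)"
      using that by (metis funpow_add le_add_diff_inverse o_apply)
    also have "\<dots> \<le> (L ^^ k) u" unfolding L_def by (rule Lpow_mono) (use Lpu L_def in simp)
    finally show ?thesis .
  qed
  have sumb: "(L ^^ n) R + (\<Sum>k<n. (L ^^ k) u) \<le> R" for n
  proof (induction n)
    case (Suc n)
    have "(L ^^ Suc n) R + (\<Sum>k<Suc n. (L ^^ k) u) = L ((L ^^ n) R + (\<Sum>k<n. (L ^^ k) u)) + u"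
      unfolding sum.lessThan_Suc_shift L_def
      by (simp add: Lop_add Lop_sum add_ac)
    also have "\<dots> \<le> L R + u" unfolding L_def
      by (intro add_mono Lop_mono order_refl Suc.IH[unfolded L_def])
    finally show ?case using LR by (rule order_trans)
  qed simp
  have nb: "of_nat n * (L ^^ n) u x \<le> R x" for n x
  proof -
    have "of_nat n * (L ^^ n) u x = (\<Sum>k<n. (L ^^ n) u x)" by simp
    also have "\<dots> \<le> (\<Sum>k<n. (L ^^ k) u x)"
      by (intro sum_mono) (use dec in \<open>auto simp: le_fun_def\<close>)
    also have "\<dots> = (\<Sum>k<n. (L ^^ k) u) x" by (simp add: sum_fun_app)
    also have "\<dots> \<le> (L ^^ n) R x + (\<Sum>k<n. (L ^^ k) u) x" by simp
    also have "\<dots> \<le> R x" using sumb[of n] by (simp add: le_fun_def)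
    finally show ?thesis .
  qed
  have Kpow_le: "(K ^^ n) 0 \<le> lfp K" for n
  proof (induction n)
    case (Suc n)
    have "(K ^^ Suc n) 0 = K ((K ^^ n) 0)" by simp
    also have "\<dots> \<le> K (lfp K)" by (rule monoD[OF Kmono Suc.IH])
    also have "\<dots> = lfp K" using lfp_unfold[OF Kmono] by simp
    finally show ?case .
  qed (simp add: le_fun_def)
  have etaK: "eta' \<le> (K ^^ n) eta'" for n
  proof (induction n)
    case (Suc n)
    have "eta' \<le> K eta'" using assms(8) K_def by simp
    also have "\<dots> \<le> K ((K ^^ n) eta')" by (rule monoD[OF Kmono Suc.IH])
    finally show ?case by simp
  qed simp
  have main: "eta' x \<le> lfp K x + (L ^^ n) u x" for n x
  proof -
    have "eta' \<le> (K ^^ n) 0 + (L ^^ n) eta'"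
      using etaK[of n] Kpow_split[where idx=idx and E=E' and n=n and \<eta>=eta'] K_def L_def by simp
    also have "\<dots> \<le> lfp K + (L ^^ n) u"
      by (intro add_mono Kpow_le) (use assms(7) L_def Lpow_mono in simp)
    finally show ?thesis by (simp add: le_fun_def)
  qed
  have "eta' x \<le> lfp K x" for x
  proof (rule ennreal_le_epsilon)
    fix e :: real assume "0 < e"
    obtain n :: nat where n: "r x / e < real n" using reals_Archimedean2 by blast
    have "(L ^^ n) u x \<le> ennreal e"
    proof (rule ccontr)
      assume "\<not> ?thesis"
      then have "ennreal e < (L ^^ n) u x" by simp
      then have "of_nat n * ennreal e \<le> of_nat n * (L ^^ n) u x"
        by (intro mult_left_mono) auto
      also have "\<dots> \<le> ennreal (r x)" using nb R_def by simp
      finally have "ennreal (real n * e) \<le> ennreal (r x)"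
        using \<open>0 < e\<close> by (simp add: ennreal_mult ennreal_of_nat_eq_real_of_nat)
      then have "real n * e \<le> r x" using assms(5) by simp
      moreover have "r x < real n * e" using n \<open>0 < e\<close> by (simp add: field_simps)
      ultimately show False by simp
    qed
    then show "eta' x \<le> lfp K x + ennreal e" using main[of x n]
      by (meson add_left_mono order_trans)
  qed
  then have "eta' \<le> lfp K" by (simp add: le_fun_def)
  also have "lfp K \<le> lfp (sys_sem idx E)"
    using assms(3) K_def by (intro lfp_mono) simp
  finally show ?thesis .
qed

end
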